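(* Let $\mathcal{X}$ be a finite set and let $P_X$ be a probability distribution on $\mathcal{X}$. For every $\alpha\in[0,\infty)$, $$\min_{P_{\hat{X}}} H_\alpha(P_X,P_{\hat{X}}) = H_\alpha(P_X),$$ where the minimum is over all probability distributions $P_{\hat{X}}$ on $\mathcal{X}$, and the minimum is attained at $P_{\hat{X}}^*=P_{X_\alpha}$.
   Context: $\mathrm{supp}(P_X)=\{x: P_X(x)>0\}$. The $\alpha$-cross entropy of two distributions $P_X,P_{\hat X}$ on $\mathcal{X}$ is $H_\alpha(P_X,P_{\hat X})=\frac{\alpha}{1-\alpha}\log\sum_{x}P_X(x)P_{\hat X}(x)^{\frac{\alpha-1}{\alpha}}$ for $\alpha\in(0,1)\cup(1,\infty)$; $H_0(P_X,P_{\hat X})=\log\max_{x\in\mathrm{supp}(P_X)}\frac{1}{P_{\hat X}(x)}$; $H_1(P_X,P_{\hat X})=-\sum_x P_X(x)\log P_{\hat X}(x)$; $H_\infty(P_X,P_{\hat X})=-\log\sum_x P_X(x)P_{\hat X}(x)$ (with the usual conventions that these may equal $+\infty$). The Rényi entropy is $H_\alpha(P_X)=\frac{1}{1-\alpha}\log\sum_x P_X(x)^\alpha$ for $\alpha\in(0,1)\cup(1,\infty)$, $H_0(P_X)=\log|\mathrm{supp}(P_X)|$, $H_1(P_X)=-\sum_x P_X(x)\log P_X(x)$, $H_\infty(P_X)=-\log\max_x P_X(x)$. The scaled distribution $P_{X_\alpha}$ is $P_{X_\alpha}(x)=P_X(x)^\alpha/\sum_{x'}P_X(x')^\alpha$ for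 $\alpha\in(0,\infty)$ (so $P_{X_1}=P_X$); $P_{X_0}(x)=1/|\mathrm{supp}(P_X)|$ for $x\in\mathrm{supp}(P_X)$ and $0$ otherwise; and for $\alpha=\infty$, $P_{X_\infty}(x)=1/|\arg\max_{x'}P_X(x')|$ for $x\in\arg\max_{x'}P_X(x')$ and $0$ otherwise. *)

theory Defs
  imports "HOL-Analysis.Analysis" "HOL-Library.Extended_Real"
begin

text \<open>Probability distributions on a finite alphabet, represented by the finite type 'a.
  Logarithms are natural logarithms.\<close>

definition is_dist :: "('a::finite \<Rightarrow> real) \<Rightarrow> bool" where
  "is_dist P \<longleftrightarrow> (\<forall>x. 0 \<le> P x) \<and> (\<Sum>x\<in>UNIV. P x) = 1"

definition supp :: "('a \<Rightarrow> real) \<Rightarrow> 'a set" where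
  "supp P = {x. P x > 0}"

definition cross_entropy :: "real \<Rightarrow> ('a::finite \<Rightarrow> real) \<Rightarrow> ('a \<Rightarrow> real) \<Rightarrow> ereal" where
  "cross_entropy \<alpha> P Q =
    (if \<alpha> = 0 then
       (if \<exists>x\<in>supp P. Q x = 0 then \<infinity>
        else ereal (ln (Max ((\<lambda>x. 1 / Q x) ` supp P))))
     else if \<alpha> = 1 then
       (if \<exists>x\<in>supp P. Q x = 0 then \<infinity>
        else ereal (- (\<Sum>x\<in>supp P. P x * ln (Q x))))
     else if \<alpha> < 1 then
       (if \<exists>x\<in>supp P. Q x = 0 then \<infinity>
        else ereal (\<alpha> / (1 - \<alpha>) * ln (\<Sum>x\<in>supp P. P x * Q x powr ((\<alpha> - 1) / \<alpha>))))
     else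
       (let S = (\<Sum>x\<in>supp P. P x * Q x powr ((\<alpha> - 1) / \<alpha>)) in
        if S = 0 then \<infinity> else ereal (\<alpha> / (1 - \<alpha>) * ln S)))"

definition renyi_entropy :: "real \<Rightarrow> ('a::finite \<Rightarrow> real) \<Rightarrow> real" where
  "renyi_entropy \<alpha> P =
    (if \<alpha> = 0 then ln (real (card (supp P)))
     else if \<alpha> = 1 then - (\<Sum>x\<in>supp P. P x * ln (P x))
     else 1 / (1 - \<alpha>) * ln (\<Sum>x\<in>supp P. P x powr \<alpha>))"

text \<open>Scaled distribution P_{X_alpha} for alpha in [0, infinity).\<close>
definition scaled_dist :: "real \<Rightarrow> ('a::finite \<Rightarrow> real) \<Rightarrow> ('a \<Rightarrow> real)" where
  "scaled_dist \<alpha> P =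
    (if \<alpha> = 0 then (\<lambda>x. if x \<in> supp P then 1 / real (card (supp P)) else 0)
     else (\<lambda>x. (if x \<in> supp P then P x powr \<alpha> else 0) /
               (\<Sum>y\<in>supp P. P y powr \<alpha>)))"

end

theory Submission
  imports Defs
begin

lemma dist_basics:
  assumes "is_dist P"
  shows "finite (supp P)" "sum P (supp P) = 1" "supp P \<noteq> {}" "\<And>x. x \<in> supp P \<Longrightarrow> P x > 0"
    "\<And>x. x \<notin> supp P \<Longrightarrow> P x = 0"
proof -
  show "finite (supp P)" by simp
  have nn: "\<And>x. 0 \<le> P x" using assms unfolding is_dist_def by auto
  show z: "\<And>x. x \<notin> supp P \<Longrightarrow> P x = 0" using nn unfolding supp_def by (metis less_eq_real_def mem_Collect_eq)
  have "sum P UNIV = sum P (supp P)"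
    by (rule sum.mono_neutral_right) (auto simp: z)
  then show "sum P (supp P) = 1" using assms unfolding is_dist_def by simp
  then show "supp P \<noteq> {}" by auto
  show "\<And>x. x \<in> supp P \<Longrightarrow> P x > 0" unfolding supp_def by auto
qed

lemma dist_sum_le:
  assumes "is_dist Q" shows "sum Q A \<le> 1"
proof -
  have nn: "\<And>x. 0 \<le> Q x" using assms unfolding is_dist_def by auto
  have "sum Q A \<le> sum Q UNIV" by (rule sum_mono2) (auto simp: nn)
  then show ?thesis using assms unfolding is_dist_def by simp
qed

lemma young_lt1:
  fixes P Q :: "'a \<Rightarrow> real"
  assumes a: "0 < \<alpha>" "\<alpha> < 1" and S: "finite S" and pP: "\<And>x. x \<in> S \<Longrightarrow> P x > 0"
    and pQ: "\<And>x. x \<in> S \<Longrightarrow> Q x > 0" and T: "T > 0"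
  shows "(\<Sum>x\<in>S. P x powr \<alpha>) \<le> T powr \<alpha> * (\<Sum>x\<in>S. \<alpha> * (P x * Q x powr ((\<alpha> - 1) / \<alpha>) / T) + (1 - \<alpha>) * Q x)"
proof -
  let ?b = "(\<alpha> - 1) / \<alpha>"
  have "P x powr \<alpha> \<le> T powr \<alpha> * (\<alpha> * (P x * Q x powr ?b / T) + (1 - \<alpha>) * Q x)" if x: "x \<in> S" for x
  proof -
    have px: "P x > 0" and qx: "Q x > 0" using pP pQ x by auto
    have y: "(P x * Q x powr ?b / T) powr \<alpha> * Q x powr (1 - \<alpha>) \<le> \<alpha> * (P x * Q x powr ?b / T) + (1 - \<alpha>) * Q x"
      using Youngs_inequality_0[of \<alpha> "1 - \<alpha>" "P x * Q x powr ?b / T" "Q x"] a px qx T by auto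
    have "(P x * Q x powr ?b / T) powr \<alpha> = P x powr \<alpha> * Q x powr (?b * \<alpha>) / T powr \<alpha>"
      using px qx T by (simp add: powr_mult powr_divide powr_powr)
    also have "?b * \<alpha> = \<alpha> - 1" using a by (simp add: field_simps)
    finally have e: "(P x * Q x powr ?b / T) powr \<alpha> * Q x powr (1 - \<alpha>) * T powr \<alpha> = P x powr \<alpha>"
      using qx T by (simp add: powr_add[symmetric])
    have "P x powr \<alpha> = T powr \<alpha> * ((P x * Q x powr ?b / T) powr \<alpha> * Q x powr (1 - \<alpha>))"
      using e by (simp add: mult_ac)
    also have "\<dots> \<le> T powr \<alpha> * (\<alpha> * (P x * Q x powr ?b / T) + (1 - \<alpha>) * Q x)"
      by (rule mult_left_mono[OF y]) simp
    finally show ?thesis .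
  qed
  then have "(\<Sum>x\<in>S. P x powr \<alpha>) \<le> (\<Sum>x\<in>S. T powr \<alpha> * (\<alpha> * (P x * Q x powr ?b / T) + (1 - \<alpha>) * Q x))"
    by (rule sum_mono)
  then show ?thesis by (simp add: sum_distrib_left)
qed

lemma young_gt1:
  fixes P Q :: "'a \<Rightarrow> real"
  assumes a: "1 < \<alpha>" and pP: "\<And>x. x \<in> S \<Longrightarrow> P x > 0"
    and nQ: "\<And>x. Q x \<ge> 0" and Z: "Z > 0"
  shows "(\<Sum>x\<in>S. P x * Q x powr ((\<alpha> - 1) / \<alpha>)) \<le> Z powr (1/\<alpha>) * (\<Sum>x\<in>S. (1/\<alpha>) * (P x powr \<alpha> / Z) + ((\<alpha> - 1) / \<alpha>) * Q x)"
proof -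
  let ?b = "(\<alpha> - 1) / \<alpha>"
  have b0: "0 \<le> ?b" using a by simp
  have "P x * Q x powr ?b \<le> Z powr (1/\<alpha>) * ((1/\<alpha>) * (P x powr \<alpha> / Z) + ?b * Q x)" if x: "x \<in> S" for x
  proof (cases "Q x = 0")
    case True
    have "0 \<le> Z powr (1/\<alpha>) * ((1/\<alpha>) * (P x powr \<alpha> / Z) + ?b * Q x)"
      using a Z True by simp
    then show ?thesis using True by simp
  next
    case False
    have px: "P x > 0" and qx: "Q x > 0" using pP x nQ[of x] False by auto
    have y: "(P x powr \<alpha> / Z) powr (1/\<alpha>) * Q x powr ?b \<le> (1/\<alpha>) * (P x powr \<alpha> / Z) + ?b * Q x"
      using Youngs_inequality_0[of "1/\<alpha>" ?b "P x powr \<alpha> / Z" "Q x"] a px qx Z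
      by (auto simp: field_simps)
    have "(P x powr \<alpha> / Z) powr (1/\<alpha>) = P x / Z powr (1/\<alpha>)"
      using px Z a by (simp add: powr_divide powr_powr)
    then have e: "P x * Q x powr ?b = Z powr (1/\<alpha>) * ((P x powr \<alpha> / Z) powr (1/\<alpha>) * Q x powr ?b)"
      using Z by simp
    show ?thesis unfolding e
      by (rule mult_left_mono[OF y]) simp
  qed
  then have "(\<Sum>x\<in>S. P x * Q x powr ?b) \<le> (\<Sum>x\<in>S. Z powr (1/\<alpha>) * ((1/\<alpha>) * (P x powr \<alpha> / Z) + ?b * Q x))"
    by (rule sum_mono)
  then show ?thesis by (simp add: sum_distrib_left)
qed


lemma part_lower:
  fixes P Q :: "'a::finite \<Rightarrow> real"
  assumes dP: "is_dist P" and dQ: "is_dist Q" and a0: "0 \<le> \<alpha>"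
  shows "ereal (renyi_entropy \<alpha> P) \<le> cross_entropy \<alpha> P Q"
proof -
  let ?S = "supp P"
  note B = dist_basics[OF dP]
  have nQ: "\<And>x. Q x \<ge> 0" using dQ unfolding is_dist_def by auto
  have SQ: "sum Q ?S \<le> 1" by (rule dist_sum_le[OF dQ])
  show ?thesis
  proof (cases "\<exists>x\<in>?S. Q x = 0 \<and> \<alpha> \<le> 1")
    case True
    then show ?thesis unfolding cross_entropy_def by auto
  next
    case F: False
    consider "\<alpha> = 0" | "\<alpha> = 1" | "0 < \<alpha>" "\<alpha> < 1" | "1 < \<alpha>" using a0 by linarith
    then show ?thesis
    proof cases
      case 1
      then have qpos: "\<And>x. x \<in> ?S \<Longrightarrow> Q x > 0" using F nQ by (metis less_eq_real_def zero_le_one)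
      let ?n = "real (card ?S)"
      have npos: "?n > 0" using B by (simp add: card_gt_0_iff)
      have "\<exists>x\<in>?S. Q x \<le> 1 / ?n"
      proof (rule ccontr)
        assume "\<not> ?thesis"
        then have "\<And>x. x \<in> ?S \<Longrightarrow> 1 / ?n < Q x" by auto
        then have "(\<Sum>x\<in>?S. 1 / ?n) < sum Q ?S"
          using B by (intro sum_strict_mono) auto
        then show False using npos SQ B(3) by simp
      qed
      then obtain x where x: "x \<in> ?S" "Q x \<le> 1 / ?n" by auto
      have "?n \<le> 1 / Q x" using x qpos[OF x(1)] npos by (simp add: field_simps)
      also have "\<dots> \<le> Max ((\<lambda>x. 1 / Q x) ` ?S)" using B x by (intro Max_ge) auto
      finally have "ln ?n \<le> ln (Max ((\<lambda>x. 1 / Q x) ` ?S))" using npos by simp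
      then show ?thesis using 1 F qpos unfolding cross_entropy_def renyi_entropy_def by auto
    next
      case 2
      then have qpos: "\<And>x. x \<in> ?S \<Longrightarrow> Q x > 0" using F nQ by (metis less_eq_real_def order_refl)
      have "(\<Sum>x\<in>?S. P x * ln (Q x)) - (\<Sum>x\<in>?S. P x * ln (P x)) = (\<Sum>x\<in>?S. P x * ln (Q x / P x))"
        unfolding sum_subtractf[symmetric]
      proof (rule sum.cong[OF refl])
        fix x assume x: "x \<in> ?S"
        have "P x > 0" "Q x > 0" using B(4)[OF x] qpos[OF x] by auto
        then show "P x * ln (Q x) - P x * ln (P x) = P x * ln (Q x / P x)"
          by (simp add: ln_div right_diff_distrib)
      qed
      also have "\<dots> \<le> (\<Sum>x\<in>?S. P x * (Q x / P x - 1))"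
        using B qpos by (intro sum_mono mult_left_mono ln_le_minus_one) (auto intro: less_imp_le)
      also have "\<dots> = sum Q ?S - sum P ?S"
        unfolding sum_subtractf[symmetric]
      proof (rule sum.cong[OF refl])
        fix x assume x: "x \<in> ?S"
        have "P x > 0" using B(4)[OF x] by auto
        then show "P x * (Q x / P x - 1) = Q x - P x"
          by (simp add: field_simps)
      qed
      also have "\<dots> \<le> 0" using SQ B by simp
      finally show ?thesis using 2 F qpos unfolding cross_entropy_def renyi_entropy_def by auto
    next
      case 3
      then have qpos: "\<And>x. x \<in> ?S \<Longrightarrow> Q x > 0" using F nQ by (metis less_eq_real_def less_imp_le)
      define T where "T = (\<Sum>x\<in>?S. P x * Q x powr ((\<alpha> - 1) / \<alpha>))"
      have Tpos: "T > 0" unfolding T_def by (intro sum_pos B(1) B(3) mult_pos_pos B(4) qpos) (auto dest: qpos)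
      have Z: "(\<Sum>x\<in>?S. P x powr \<alpha>) \<le> T powr \<alpha> * (\<Sum>x\<in>?S. \<alpha> * (P x * Q x powr ((\<alpha> - 1) / \<alpha>) / T) + (1 - \<alpha>) * Q x)"
        using young_lt1[OF 3 B(1) B(4) qpos Tpos] .
      have "(\<Sum>x\<in>?S. \<alpha> * (P x * Q x powr ((\<alpha> - 1) / \<alpha>) / T) + (1 - \<alpha>) * Q x) = \<alpha> * ((\<Sum>x\<in>?S. P x * Q x powr ((\<alpha> - 1) / \<alpha>)) / T) + (1 - \<alpha>) * sum Q ?S"
        by (simp add: sum.distrib sum_distrib_left sum_divide_distrib)
      also have "\<dots> = \<alpha> * (T / T) + (1 - \<alpha>) * sum Q ?S" unfolding T_def by simp
      also have "\<dots> \<le> 1"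
      proof -
        have "(1 - \<alpha>) * sum Q ?S \<le> 1 - \<alpha>" using 3 SQ by (intro mult_left_le) auto
        then show ?thesis using Tpos by simp
      qed
      finally have "(\<Sum>x\<in>?S. P x powr \<alpha>) \<le> T powr \<alpha>"
        using Z by (smt (verit) mult_left_le powr_ge_zero)
      moreover have Zpos: "(\<Sum>x\<in>?S. P x powr \<alpha>) > 0" by (intro sum_pos B(1) B(3)) (auto dest: B(4))
      ultimately have "ln (\<Sum>x\<in>?S. P x powr \<alpha>) \<le> ln (T powr \<alpha>)" using Tpos by (subst ln_le_cancel_iff) auto
      also have "ln (T powr \<alpha>) = \<alpha> * ln T" by simp
      finally have "ln (\<Sum>x\<in>?S. P x powr \<alpha>) \<le> \<alpha> * ln T" .
      then have "1 / (1 - \<alpha>) * ln (\<Sum>x\<in>?S. P x powr \<alpha>) \<le> 1 / (1 - \<alpha>) * (\<alpha> * ln T)"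
        using 3 by (intro mult_left_mono) auto
      then show ?thesis using 3 F qpos unfolding cross_entropy_def renyi_entropy_def T_def[symmetric] by auto
    next
      case 4
      define T where "T = (\<Sum>x\<in>?S. P x * Q x powr ((\<alpha> - 1) / \<alpha>))"
      define Z where "Z = (\<Sum>x\<in>?S. P x powr \<alpha>)"
      have Zpos: "Z > 0" unfolding Z_def by (intro sum_pos B(1) B(3)) (auto dest: B(4))
      have T0: "T \<ge> 0" unfolding T_def by (intro sum_nonneg mult_nonneg_nonneg) (auto dest: B(4) intro: less_imp_le)
      have Y: "T \<le> Z powr (1/\<alpha>) * (\<Sum>x\<in>?S. (1/\<alpha>) * (P x powr \<alpha> / Z) + ((\<alpha> - 1) / \<alpha>) * Q x)"
        unfolding T_def using young_gt1[OF 4 B(4) nQ Zpos] .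
      have "(\<Sum>x\<in>?S. (1/\<alpha>) * (P x powr \<alpha> / Z) + ((\<alpha> - 1) / \<alpha>) * Q x) = (1/\<alpha>) * ((\<Sum>x\<in>?S. P x powr \<alpha>) / Z) + ((\<alpha> - 1) / \<alpha>) * sum Q ?S"
        by (simp add: sum.distrib sum_distrib_left sum_divide_distrib)
      also have "\<dots> = (1/\<alpha>) * (Z / Z) + ((\<alpha> - 1) / \<alpha>) * sum Q ?S" unfolding Z_def by simp
      also have "\<dots> \<le> (1/\<alpha>) + ((\<alpha> - 1) / \<alpha>)" 
      proof -
        have "((\<alpha> - 1) / \<alpha>) * sum Q ?S \<le> (\<alpha> - 1) / \<alpha>" using 4 SQ by (intro mult_left_le) auto
        then show ?thesis using Zpos by simp
      qed
      also have "\<dots> = 1" using 4 by (simp add: field_simps)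
      finally have "T \<le> Z powr (1/\<alpha>)" using Y by (smt (verit) mult_left_le powr_ge_zero)
      show ?thesis
      proof (cases "T = 0")
        case True then show ?thesis using 4 unfolding cross_entropy_def T_def[symmetric] Let_def by auto
      next
        case False
        then have Tpos: "T > 0" using T0 by simp
        have "ln T \<le> ln (Z powr (1/\<alpha>))" using Tpos Zpos \<open>T \<le> Z powr (1/\<alpha>)\<close>
          by (subst ln_le_cancel_iff) auto
        also have "\<dots> = (1/\<alpha>) * ln Z" by (rule ln_powr)
        finally have "\<alpha> * ln T \<le> ln Z" using 4 by (simp add: field_simps)
        then have "1 / (1 - \<alpha>) * ln Z \<le> 1 / (1 - \<alpha>) * (\<alpha> * ln T)"
          using 4 by (intro mult_left_mono_neg) auto
        then show ?thesis using 4 False unfolding cross_entropy_def renyi_entropy_def T_def[symmetric] Z_def[symmetric] Let_def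
          by auto
      qed
    qed
  qed
qed


lemma part_scaled:
  fixes P :: "'a::finite \<Rightarrow> real"
  assumes dP: "is_dist P" and a0: "0 \<le> \<alpha>"
  shows "is_dist (scaled_dist \<alpha> P) \<and> cross_entropy \<alpha> P (scaled_dist \<alpha> P) = ereal (renyi_entropy \<alpha> P)"
proof -
  let ?S = "supp P"
  note B = dist_basics[OF dP]
  show ?thesis
  proof (cases "\<alpha> = 0")
    case True
    let ?n = "real (card ?S)"
    have npos: "?n > 0" using B by (simp add: card_gt_0_iff)
    have D: "scaled_dist \<alpha> P = (\<lambda>x. if x \<in> ?S then 1 / ?n else 0)"
      using True unfolding scaled_dist_def by simp
    have sd: "(\<Sum>x\<in>UNIV. (if x \<in> ?S then 1 / ?n else 0)) = 1"
      using npos B(3) by (simp add: sum.If_cases)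
    have im: "(\<lambda>x. 1 / (if x \<in> ?S then 1 / ?n else 0)) ` ?S = {?n}"
      using B(3) by auto
    show ?thesis using npos sd im
      unfolding D is_dist_def cross_entropy_def renyi_entropy_def using True by auto
  next
    case False
    then have apos: "\<alpha> > 0" using a0 by simp
    define Z where "Z = (\<Sum>y\<in>?S. P y powr \<alpha>)"
    have Zpos: "Z > 0" unfolding Z_def by (intro sum_pos B(1) B(3)) (auto dest: B(4))
    define D where "D = (\<lambda>x. (if x \<in> ?S then P x powr \<alpha> else 0) / Z)"
    have SD: "scaled_dist \<alpha> P = D" using False unfolding scaled_dist_def D_def Z_def by simp
    have sd: "(\<Sum>x\<in>UNIV. D x) = 1"
      unfolding D_def sum_divide_distrib[symmetric] using Zpos by (simp add: sum.If_cases Z_def)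
    have Dnn: "\<And>x. D x \<ge> 0" unfolding D_def using Zpos by simp
    have isd: "is_dist D" unfolding is_dist_def using sd Dnn by simp
    have Dpos: "D x > 0" if x: "x \<in> ?S" for x
      using Zpos B(4)[OF x] x unfolding D_def by simp
    have cross: "cross_entropy \<alpha> P D = ereal (renyi_entropy \<alpha> P)"
    proof (cases "\<alpha> = 1")
      case True
      have "Z = sum P ?S" unfolding Z_def True
      proof (rule sum.cong[OF refl])
        fix x assume x: "x \<in> ?S"
        show "P x powr 1 = P x" using B(4)[OF x] by simp
      qed
      then have Z1: "Z = 1" using B(2) by simp
      have DP: "D x = P x" if x: "x \<in> ?S" for x
        unfolding D_def Z1 True using B(4)[OF x] x by simp
      have "(\<Sum>x\<in>?S. P x * ln (D x)) = (\<Sum>x\<in>?S. P x * ln (P x))"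
        by (rule sum.cong) (auto simp: DP)
      moreover have "\<not> (\<exists>x\<in>?S. D x = 0)" using Dpos by force
      ultimately show ?thesis using True unfolding cross_entropy_def renyi_entropy_def
        by (auto simp del: ln_mult)
    next
      case a1: False
      let ?b = "(\<alpha> - 1) / \<alpha>"
      have "(\<Sum>x\<in>?S. P x * D x powr ?b) = (\<Sum>x\<in>?S. P x powr \<alpha> * Z powr (- ?b))"
      proof (rule sum.cong[OF refl])
        fix x assume x: "x \<in> ?S"
        have px: "P x > 0" using B(4)[OF x] .
        have "D x powr ?b = P x powr (\<alpha> * ?b) / Z powr ?b"
          unfolding D_def using x px Zpos by (simp add: powr_divide powr_powr)
        also have "\<alpha> * ?b = \<alpha> - 1" using apos by (simp add: field_simps)
        finally have "P x * D x powr ?b = P x powr 1 * P x powr (\<alpha> - 1) / Z powr ?b" using px by simp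
        also have "\<dots> = P x powr (1 + (\<alpha> - 1)) / Z powr ?b"
          by (simp only: powr_add)
        also have "\<dots> = P x powr \<alpha> * Z powr (- ?b)"
          by (simp add: powr_minus divide_inverse)
        finally show "P x * D x powr ?b = P x powr \<alpha> * Z powr (- ?b)" .
      qed
      also have "\<dots> = Z * Z powr (- ?b)" unfolding Z_def by (simp add: sum_distrib_right)
      also have "\<dots> = Z powr (1 / \<alpha>)"
      proof -
        have "Z * Z powr (- ?b) = Z powr 1 * Z powr (- ?b)" using Zpos by simp
        also have "\<dots> = Z powr (1 + - ?b)" by (simp only: powr_add)
        also have "1 + - ?b = 1 / \<alpha>" using apos by (simp add: field_simps)
        finally show ?thesis .
      qed
      finally have T: "(\<Sum>x\<in>?S. P x * D x powr ?b) = Z powr (1 / \<alpha>)" .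
      have Tpos: "Z powr (1 / \<alpha>) \<noteq> 0" using Zpos by simp
      have L: "\<alpha> / (1 - \<alpha>) * ln (Z powr (1 / \<alpha>)) = 1 / (1 - \<alpha>) * ln Z"
        using apos a1 by (simp add: field_simps)
      have "\<not> (\<exists>x\<in>?S. D x = 0)" using Dpos by force
      then show ?thesis using a1 False Tpos L unfolding cross_entropy_def renyi_entropy_def T Let_def Z_def[symmetric]
        by auto
    qed
    show ?thesis using SD isd cross by simp
  qed
qed


theorem theorem1:
  fixes P :: "'a::finite \<Rightarrow> real" and \<alpha> :: real
  assumes "is_dist P" and "0 \<le> \<alpha>"
  shows "(\<forall>Q. is_dist Q \<longrightarrow> ereal (renyi_entropy \<alpha> P) \<le> cross_entropy \<alpha> P Q)
         \<and> is_dist (scaled_dist \<alpha> P)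
         \<and> cross_entropy \<alpha> P (scaled_dist \<alpha> P) = ereal (renyi_entropy \<alpha> P)"
  using part_lower[OF assms(1) _ assms(2)] part_scaled[OF assms] by blast

end
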